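(* Let $p$ be an odd prime, $\ell$ an integer not divisible by $p$, $a$ the remainder of $\ell$ modulo $p$ and $a_0=\lfloor\ell/p\rfloor$. Let $\nu_i=\lfloor\frac{a+i\ell}{p}\rfloor$ and $n_i=\min_{0\le j\le p-1-i}(\nu_{i+j}-\nu_j)$ for $0\le i\le p-1$. Then for every $0\le i\le p-1$, $$n_i=ia_0+\Big\lfloor i\frac{a}{p}\Big\rfloor+\epsilon_i,$$ where $\epsilon_i=1$ if $p-i\in E$ and $\epsilon_i=0$ otherwise.
   Context: For a real number $x$, $\operatorname{frac}(x)=x-\lfloor x\rfloor$. The set $E$ is defined as $E=\{h\in\mathbb{Z}: 1\le h<p,\ \text{and for all integers } 1\le h'<h,\ \operatorname{frac}(h'a/p)>\operatorname{frac}(ha/p)\}$. *)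

theory Defs
  imports "HOL-Number_Theory.Number_Theory"
begin

definition frac_part :: "real \<Rightarrow> real" where
  "frac_part x = x - of_int \<lfloor>x\<rfloor>"

definition E_set :: "int \<Rightarrow> int \<Rightarrow> int set" where
  "E_set p a = {h. 1 \<le> h \<and> h < p \<and>
     (\<forall>h'. 1 \<le> h' \<and> h' < h \<longrightarrow>
        frac_part (of_int (h' * a) / of_int p) > frac_part (of_int (h * a) / of_int p))}"

definition nu :: "int \<Rightarrow> int \<Rightarrow> int \<Rightarrow> nat \<Rightarrow> int" where
  "nu p l a i = \<lfloor>(of_int a + of_nat i * of_int l) / (of_int p :: real)\<rfloor>"

definition n_min :: "int \<Rightarrow> int \<Rightarrow> int \<Rightarrow> nat \<Rightarrow> int" where
  "n_min p l a i = Min ((\<lambda>j. nu p l a (i + j) - nu p l a j) ` {0 .. nat p - 1 - i})"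

end

theory Submission
  imports Defs
begin

lemma frac_eq:
  assumes "(p::int) > 0"
  shows "frac_part (of_int x / of_int p) = of_int (x mod p) / of_int p"
proof -
  have e: "(of_int x::real) = of_int p * of_int (x div p) + of_int (x mod p)"
    by (metis div_mult_mod_eq of_int_add of_int_mult mult.commute)
  show ?thesis unfolding frac_part_def floor_divide_of_int_eq
    using assms by (simp add: e field_simps)
qed

lemma E_iff:
  assumes "(p::int) > 0"
  shows "h \<in> E_set p a \<longleftrightarrow> 1 \<le> h \<and> h < p \<and>
     (\<forall>h'. 1 \<le> h' \<and> h' < h \<longrightarrow> (h'*a) mod p > (h*a) mod p)"
proof -
  have k: "frac_part (of_int x / of_int p) < frac_part (of_int y / of_int p) \<longleftrightarrow> x mod p < y mod p" for x y
    using assms by (simp add: frac_eq divide_less_cancel)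
  show ?thesis unfolding E_set_def mem_Collect_eq k by blast
qed

lemma nu_eq:
  assumes "(p::int) > 0"
  shows "nu p l a k = (a + int k * l) div p"
proof -
  have "(of_int a + of_nat k * of_int l :: real) = of_int (a + int k * l)" by simp
  then show ?thesis unfolding nu_def by (simp only: floor_divide_of_int_eq)
qed

lemma nu_eq2:
  assumes "(p::int) > 0" "a = l mod p"
  shows "(a + int k * l) div p = int k * (l div p) + ((int k + 1) * a) div p"
proof -
  have l: "l = p * (l div p) + a" using assms(2) by simp
  have e: "a + int k * l = (int k + 1) * a + p * (int k * (l div p))"
    by (subst l) (simp add: algebra_simps)
  have "(a + int k * l) div p = ((int k + 1) * a + p * (int k * (l div p))) div p"
    by (simp only: e)
  also have "\<dots> = ((int k + 1) * a) div p + int k * (l div p)"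
    using assms(1) by (simp only: div_mult_self2 [OF less_imp_neq[OF assms(1), symmetric]])
  finally show ?thesis by simp
qed

lemma cdiv:
  assumes "(p::int) > 0"
  shows "(x mod p + y mod p) div p = (if p \<le> x mod p + y mod p then 1 else 0)"
proof -
  have b: "0 \<le> x mod p" "x mod p < p" "0 \<le> y mod p" "y mod p < p" using assms by auto
  show ?thesis
  proof (cases "p \<le> x mod p + y mod p")
    case True
    have "(x mod p + y mod p) div p = (x mod p + y mod p - p) div p + 1"
      by (rule div_pos_geq[OF assms True])
    moreover have "(x mod p + y mod p - p) div p = 0"
      by (rule div_pos_pos_trivial) (use True b in linarith)+
    ultimately show ?thesis using True by simp
  next
    case False
    have "(x mod p + y mod p) div p = 0"
      by (rule div_pos_pos_trivial) (use False b in linarith)+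
    then show ?thesis using False by simp
  qed
qed

theorem lemma7p1:
  fixes p l :: int and i :: nat
  assumes "prime p" and "odd p" and "\<not> p dvd l"
    and "i \<le> nat p - 1"
  defines "a \<equiv> l mod p" and "a0 \<equiv> \<lfloor>of_int l / (of_int p :: real)\<rfloor>"
  shows "n_min p l a i = int i * a0 + \<lfloor>of_nat i * of_int a / (of_int p :: real)\<rfloor>
           + (if p - int i \<in> E_set p a then 1 else 0)"
proof -
  have p1: "p > 1" using assms(1) prime_gt_1_int by blast
  then have p0: "p > 0" by simp
  have a0: "a0 = l div p" unfolding a0_def by (simp only: floor_divide_of_int_eq)
  have fl: "\<lfloor>of_nat i * of_int a / (of_int p :: real)\<rfloor> = (int i * a) div p"
  proof -
    have "(of_nat i * of_int a :: real) = of_int (int i * a)" by simp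
    then show ?thesis by (simp only: floor_divide_of_int_eq)
  qed
  have ndvd: "\<not> p dvd (k * a)" if "0 < k" "k < p" for k
  proof
    assume "p dvd k * a"
    then have "p dvd k \<or> p dvd a" using assms(1) prime_dvd_mult_iff by blast
    moreover have "\<not> p dvd k" using that zdvd_imp_le by fastforce
    moreover have "\<not> p dvd a" using assms(3) unfolding a_def by (simp add: dvd_mod_iff)
    ultimately show False by blast
  qed
  have imod_gen: "(int i * a) mod p + ((p - int i) * a) mod p = p" if "int i \<ge> 1" "1 \<le> p - int i"
  proof -
    have nz: "(int i * a) mod p \<noteq> 0" using ndvd[of "int i"] that by auto
    have "((p - int i) * a) mod p = (- (int i * a)) mod p"
    proof -
      have "(p - int i) * a = - (int i * a) + a * p" by (simp add: algebra_simps)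
      then show ?thesis by (simp only: mod_mult_self1)
    qed
    also have "\<dots> = p - (int i * a) mod p" using nz by (simp add: zmod_zminus1_eq_if)
    finally show ?thesis by simp
  qed
  define S where "S = {0 .. nat p - 1 - i}"
  define K where "K = int i * a0 + (int i * a) div p"
  define c where "c j = (if p \<le> ((int j + 1) * a) mod p + (int i * a) mod p then 1 else (0::int))" for j
  have elt: "nu p l a (i + j) - nu p l a j = K + c j" for j
  proof -
    have "nu p l a (i + j) - nu p l a j
        = int i * (l div p) + ((int j + 1 + int i) * a) div p - ((int j + 1) * a) div p"
    proof -
      have A: "nu p l a (i+j) = int (i+j) * (l div p) + ((int (i+j) + 1)*a) div p"
        by (simp only: nu_eq[OF p0] nu_eq2[OF p0 a_def[THEN meta_eq_to_obj_eq]])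
      have B: "nu p l a j = int j * (l div p) + ((int j + 1)*a) div p"
        by (simp only: nu_eq[OF p0] nu_eq2[OF p0 a_def[THEN meta_eq_to_obj_eq]])
      have C: "int (i+j) + 1 = int j + 1 + int i" by simp
      show ?thesis unfolding A B C by (simp add: algebra_simps)
    qed
    also have "((int j + 1 + int i) * a) div p = ((int j + 1) * a) div p + (int i * a) div p
       + (((int j + 1) * a) mod p + (int i * a) mod p) div p"
    proof -
      have "(int j + 1 + int i) * a = (int j + 1) * a + int i * a" by (simp add: algebra_simps)
      then show ?thesis by (simp only: div_add1_eq[of "(int j + 1) * a" "int i * a" p])
    qed
    finally show ?thesis unfolding K_def c_def a0 cdiv[OF p0] by simp
  qed
  have nm: "n_min p l a i = Min ((\<lambda>j. K + c j) ` S)"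
    unfolding n_min_def S_def using elt by simp
  have fin: "finite ((\<lambda>j. K + c j) ` S)" unfolding S_def by simp
  have c01: "c j = 0 \<or> c j = 1" for j unfolding c_def by simp
  show ?thesis
  proof (cases "p - int i \<in> E_set p a")
    case True
    then have hE: "1 \<le> p - int i" "p - int i < p" "\<forall>h'. 1 \<le> h' \<and> h' < p - int i \<longrightarrow> (h'*a) mod p > ((p - int i)*a) mod p"
      using E_iff[OF p0] by auto
    then have i1: "int i \<ge> 1" by simp
    have imod: "(int i * a) mod p + ((p - int i) * a) mod p = p"
      using imod_gen i1 hE(1) by simp
    have "c j = 1" if "j \<in> S" for j
    proof -
      have jj: "j \<le> nat p - 1 - i" using that unfolding S_def by auto
      have "1 \<le> int j + 1" "int j + 1 \<le> p - int i" using jj hE(1) p1 by linarith+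
      then have "((int j + 1) * a) mod p \<ge> ((p - int i)*a) mod p"
        using hE(3)[rule_format, of "int j + 1"] by (cases "int j + 1 = p - int i") auto
      then show ?thesis unfolding c_def using imod by simp
    qed
    then have "(\<lambda>j. K + c j) ` S = {K + 1}" unfolding S_def by auto
    then show ?thesis using nm True fl unfolding K_def by simp
  next
    case False
    have ex: "\<exists>j\<in>S. c j = 0"
    proof (cases "i = 0")
      case True
      have "0 \<in> S" unfolding S_def by simp
      moreover have "c 0 = 0" unfolding c_def using True pos_mod_bound[OF p0, of a] by (simp add: linorder_not_le)
      ultimately show ?thesis by blast
    next
      case False
      then have i1: "int i \<ge> 1" by simp
      have h1: "1 \<le> p - int i" using assms(4) p1 by linarith
      have hlt: "p - int i < p" using i1 by simp
      from False h1 hlt \<open>p - int i \<notin> E_set p a\<close> obtain h' where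
        h': "1 \<le> h'" "h' < p - int i" "\<not> (h'*a) mod p > ((p - int i)*a) mod p"
        using E_iff[OF p0] by auto
      have "(h'*a) mod p \<noteq> ((p - int i)*a) mod p"
      proof
        assume "(h'*a) mod p = ((p - int i)*a) mod p"
        then have "p dvd ((p - int i) - h') * a" by (metis mod_eq_dvd_iff left_diff_distrib)
        then show False using ndvd[of "(p - int i) - h'"] h' by simp
      qed
      then have lt: "(h'*a) mod p + (int i * a) mod p < p" using h' imod_gen[OF i1 h1] by linarith
      define j where "j = nat (h' - 1)"
      have "int j + 1 = h'" unfolding j_def using h' by simp
      moreover have "j \<in> S" unfolding S_def j_def using h' by auto
      ultimately show ?thesis unfolding c_def using lt by (metis linorder_not_le)
    qed
    have "Min ((\<lambda>j. K + c j) ` S) = K"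
    proof (rule Min_eqI[OF fin])
      show "K \<le> y" if "y \<in> (\<lambda>j. K + c j) ` S" for y
      proof -
        from that obtain j where "y = K + c j" by blast
        then show ?thesis using c01[of j] by auto
      qed
      show "K \<in> (\<lambda>j. K + c j) ` S" using ex by force
    qed
    then show ?thesis using nm False fl unfolding K_def by simp
  qed
qed

end
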